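(* Let $\mathcal H=\mathbb C^2$ with reference basis the eigenbasis $\{|0\rangle,|1\rangle\}$ of $\sigma_z$, and let the Hamiltonian be $H(t)=\varepsilon_0\mathbb I_2+\tfrac{\omega(t)}{2}\sigma_z$ (diagonal in that basis). Let $\Phi$ be a qubit CPTP map that is phase covariant with respect to $\sigma_z$, i.e. $e^{-i\phi\sigma_z}\Phi[\rho]e^{i\phi\sigma_z}=\Phi[e^{-i\phi\sigma_z}\rho e^{i\phi\sigma_z}]$ for all $\phi\in\mathbb R$ and all $\rho$. Then for every initial qubit state $\rho_i$ the coherence fluctuation distance vanishes: $\mathfrak D_c(\rho_i)=0$.
   Context: EPM distribution: for a state $\rho$, $p_{\rm coh}^{l,k}(\rho)=\mathrm{Tr}(\rho\Pi^i_l)\,\mathrm{Tr}(\Phi[\rho]\Pi^f_k)$, where $\Pi^i_l$ and $\Pi^f_k$ are the projectors onto the energy eigenbasis (here $|0\rangle\langle0|,|1\rangle\langle1|$) at the initial and final times. Coherence fluctuation distance: $\mathfrak D_c(\rho_i)=\min_{\rho^{\mathcal I}\in\mathscr I}D_{KL}\big(p_{\rm coh}(\rho_i)\,\|\,p_{\rm coh}(\rho^{\mathcal I})\big)$, where $\mathscr I$ is the set of states diagonal in the eigenbasis of the initial Hamiltonian and $D_{KL}(p\|q)=\sum_x p_x\ln(p_x/q_x)$. *)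

theory Defs
  imports Complex_Main "HOL-Library.Extended_Real" "Jordan_Normal_Form.Matrix"
begin

text \<open>Qubit operators are complex 2x2 matrices (Jordan_Normal_Form), in the reference
  basis |0>, |1> (the sigma_z eigenbasis = energy eigenbasis of H(t)).\<close>

definition tr :: "complex mat \<Rightarrow> complex" where
  "tr A = (\<Sum>i<dim_row A. A $$ (i, i))"

definition psd :: "nat \<Rightarrow> complex mat \<Rightarrow> bool" where
  "psd n A \<longleftrightarrow> A \<in> carrier_mat n n \<and>
     (\<forall>v :: nat \<Rightarrow> complex.
        Im (\<Sum>i<n. \<Sum>j<n. cnj (v i) * A $$ (i, j) * v j) = 0 \<and>
        Re (\<Sum>i<n. \<Sum>j<n. cnj (v i) * A $$ (i, j) * v j) \<ge> 0)"

definition density :: "complex mat \<Rightarrow> bool" where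
  "density \<rho> \<longleftrightarrow> psd 2 \<rho> \<and> tr \<rho> = 1"

definition qubit_linear :: "(complex mat \<Rightarrow> complex mat) \<Rightarrow> bool" where
  "qubit_linear \<Phi> \<longleftrightarrow>
     (\<forall>A \<in> carrier_mat 2 2. \<Phi> A \<in> carrier_mat 2 2) \<and>
     (\<forall>A \<in> carrier_mat 2 2. \<forall>B \<in> carrier_mat 2 2. \<Phi> (A + B) = \<Phi> A + \<Phi> B) \<and>
     (\<forall>A \<in> carrier_mat 2 2. \<forall>c. \<Phi> (c \<cdot>\<^sub>m A) = c \<cdot>\<^sub>m \<Phi> A)"

text \<open>(id_k \<otimes> \<Phi>) applied to a 2k x 2k matrix viewed as k x k blocks of 2x2 matrices.\<close>
definition ampl :: "(complex mat \<Rightarrow> complex mat) \<Rightarrow> nat \<Rightarrow> complex mat \<Rightarrow> complex mat" where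
  "ampl \<Phi> k M = mat (2*k) (2*k) (\<lambda>(i, j).
      \<Phi> (mat 2 2 (\<lambda>(a, b). M $$ (2 * (i div 2) + a, 2 * (j div 2) + b))) $$ (i mod 2, j mod 2))"

definition completely_positive :: "(complex mat \<Rightarrow> complex mat) \<Rightarrow> bool" where
  "completely_positive \<Phi> \<longleftrightarrow> (\<forall>k \<ge> 1. \<forall>M. psd (2*k) M \<longrightarrow> psd (2*k) (ampl \<Phi> k M))"

definition trace_preserving :: "(complex mat \<Rightarrow> complex mat) \<Rightarrow> bool" where
  "trace_preserving \<Phi> \<longleftrightarrow> (\<forall>A \<in> carrier_mat 2 2. tr (\<Phi> A) = tr A)"

definition CPTP :: "(complex mat \<Rightarrow> complex mat) \<Rightarrow> bool" where
  "CPTP \<Phi> \<longleftrightarrow> qubit_linear \<Phi> \<and> completely_positive \<Phi> \<and> trace_preserving \<Phi>"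

text \<open>exp(-i phi sigma_z) = diag(e^{-i phi}, e^{i phi}).\<close>
definition Uz :: "real \<Rightarrow> complex mat" where
  "Uz \<phi> = mat 2 2 (\<lambda>(a, b). if a = b then (if a = 0 then cis (-\<phi>) else cis \<phi>) else 0)"

definition phase_covariant :: "(complex mat \<Rightarrow> complex mat) \<Rightarrow> bool" where
  "phase_covariant \<Phi> \<longleftrightarrow> (\<forall>\<phi>::real. \<forall>\<rho> \<in> carrier_mat 2 2.
      Uz \<phi> * \<Phi> \<rho> * Uz (-\<phi>) = \<Phi> (Uz \<phi> * \<rho> * Uz (-\<phi>)))"

definition proj :: "nat \<Rightarrow> complex mat" where
  "proj l = mat 2 2 (\<lambda>(a, b). if a = l \<and> b = l then 1 else 0)"

definition p_coh :: "(complex mat \<Rightarrow> complex mat) \<Rightarrow> complex mat \<Rightarrow> nat \<times> nat \<Rightarrow> real" where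
  "p_coh \<Phi> \<rho> = (\<lambda>(l, k). Re (tr (\<rho> * proj l) * tr (\<Phi> \<rho> * proj k)))"

definition KL :: "'a set \<Rightarrow> ('a \<Rightarrow> real) \<Rightarrow> ('a \<Rightarrow> real) \<Rightarrow> ereal" where
  "KL X p q = (\<Sum>x\<in>X. if p x = 0 then 0 else if q x = 0 then \<infinity>
                        else ereal (p x * ln (p x / q x)))"

definition incoherent :: "complex mat \<Rightarrow> bool" where
  "incoherent \<sigma> \<longleftrightarrow> density \<sigma> \<and> \<sigma> $$ (0, 1) = 0 \<and> \<sigma> $$ (1, 0) = 0"

definition coh_fluct_dist :: "(complex mat \<Rightarrow> complex mat) \<Rightarrow> complex mat \<Rightarrow> ereal" where
  "coh_fluct_dist \<Phi> \<rho> =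
     (INF \<sigma> \<in> {\<sigma>. incoherent \<sigma>}. KL ({0,1} \<times> {0,1}) (p_coh \<Phi> \<rho>) (p_coh \<Phi> \<sigma>))"

end

theory Submission
  imports Defs
begin

lemma mult2: assumes "A \<in> carrier_mat 2 2" "B \<in> carrier_mat 2 2" "i < 2" "j < 2"
  shows "(A*B)$$(i,j) = A$$(i,0)*B$$(0,j) + A$$(i,1)*B$$(1,j)"
  using assms by (simp add: scalar_prod_def eval_nat_numeral row_def col_def)

lemma tr_proj: assumes "A \<in> carrier_mat 2 2" "l < 2"
  shows "tr (A * proj l) = A$$(l,l)"
  using assms unfolding tr_def proj_def
  by (auto simp add: eval_nat_numeral less_Suc_eq scalar_prod_def)

lemma psd_diag: assumes "psd 2 A" "i < 2" shows "Im (A$$(i,i)) = 0" "Re (A$$(i,i)) \<ge> 0"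
proof -
  from assms(1) have H: "\<forall>v::nat\<Rightarrow>complex. Im (\<Sum>a<2. \<Sum>b<2. cnj (v a) * A $$ (a, b) * v b) = 0 \<and>
        Re (\<Sum>a<2. \<Sum>b<2. cnj (v a) * A $$ (a, b) * v b) \<ge> 0"
    unfolding psd_def by blast
  have "Im (\<Sum>a<2. \<Sum>b<2. cnj ((\<lambda>x. if x = i then 1 else 0) a) * A $$ (a, b) * (\<lambda>x. if x = i then 1 else 0) b) = 0 \<and>
        Re (\<Sum>a<2. \<Sum>b<2. cnj ((\<lambda>x. if x = i then 1 else 0) a) * A $$ (a, b) * (\<lambda>x. if x = i then 1 else 0) b) \<ge> 0"
    by (rule spec[OF H])
  moreover have "(\<Sum>a<2. \<Sum>b<2. cnj ((\<lambda>x. if x = i then 1 else 0) a) * A $$ (a, b) * (\<lambda>x. if x = i then 1 else 0) b) = A$$(i,i)"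
    using assms(2) by (auto simp: eval_nat_numeral less_Suc_eq)
  ultimately show "Im (A$$(i,i)) = 0" "Re (A$$(i,i)) \<ge> 0" by auto
qed

lemma CPTP_density:
  assumes "CPTP \<Phi>" "density \<rho>"
  shows "psd 2 (\<Phi> \<rho>)" "tr (\<Phi> \<rho>) = 1" "\<Phi> \<rho> \<in> carrier_mat 2 2"
proof -
  have car: "\<rho> \<in> carrier_mat 2 2" using assms(2) unfolding density_def psd_def by blast
  show c2: "\<Phi> \<rho> \<in> carrier_mat 2 2" using assms(1) car unfolding CPTP_def qubit_linear_def by blast
  show "tr (\<Phi> \<rho>) = 1" using assms car unfolding CPTP_def trace_preserving_def density_def by auto
  have "psd (2*1) (ampl \<Phi> 1 \<rho>)" using assms car unfolding CPTP_def completely_positive_def density_def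
    by auto
  moreover have "mat 2 2 (\<lambda>(a, b). \<rho> $$ (2 * (i div 2) + a, 2 * (j div 2) + b)) = \<rho>" if "i < 2" "j < 2" for i j
    using that car by (intro eq_matI) auto
  hence "ampl \<Phi> 1 \<rho> = \<Phi> \<rho>" unfolding ampl_def using c2 by (intro eq_matI) auto
  ultimately show "psd 2 (\<Phi> \<rho>)" by simp
qed

lemma p_coh_props:
  assumes "CPTP \<Phi>" "density \<rho>"
  shows "\<And>x. p_coh \<Phi> \<rho> x \<ge> 0" "(\<Sum>x\<in>{0,1}\<times>{0,1}. p_coh \<Phi> \<rho> x) = 1"
proof -
  have car: "\<rho> \<in> carrier_mat 2 2" and ps: "psd 2 \<rho>" and t: "tr \<rho> = 1"
    using assms(2) unfolding density_def psd_def by blast+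
  note F = CPTP_density[OF assms]
  fix x :: "nat \<times> nat"
  obtain l k where x: "x = (l,k)" by force
  show "p_coh \<Phi> \<rho> x \<ge> 0"
  proof (cases "l < 2 \<and> k < 2")
    case True
    then show ?thesis using x tr_proj[OF car] tr_proj[OF F(3)] psd_diag[OF ps] psd_diag[OF F(1)]
      by (simp add: p_coh_def)
  next
    case False
    have "tr (A * proj m) = 0" if "A \<in> carrier_mat 2 2" "\<not> m < 2" for A m
      using that unfolding tr_def proj_def
      by (simp add: eval_nat_numeral mult2 scalar_prod_def col_def row_def)
    then show ?thesis using False x car F(3) by (auto simp: p_coh_def)
  qed
next
  have car: "\<rho> \<in> carrier_mat 2 2" and t: "tr \<rho> = 1"
    using assms(2) unfolding density_def psd_def by blast+
  note F = CPTP_density[OF assms]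
  have "(\<Sum>x\<in>{0,1}\<times>{0,1}. p_coh \<Phi> \<rho> x) =
     Re ((\<rho>$$(0,0) + \<rho>$$(1,1)) * (\<Phi> \<rho> $$(0,0) + \<Phi> \<rho> $$(1,1)))"
    using tr_proj[OF car] tr_proj[OF F(3)] by (simp add: p_coh_def algebra_simps)
  also have "\<dots> = 1" using t F(2) car F(3) by (simp add: tr_def eval_nat_numeral)
  finally show "(\<Sum>x\<in>{0,1}\<times>{0,1}. p_coh \<Phi> \<rho> x) = 1" .
qed

lemma KL_nonneg:
  fixes p q :: "'a \<Rightarrow> real"
  assumes "finite X" "\<And>x. p x \<ge> 0" "\<And>x. q x \<ge> 0" "sum p X = 1" "sum q X = 1"
  shows "KL X p q \<ge> 0"
proof -
  have "ereal (p x - q x) \<le> (if p x = 0 then 0 else if q x = 0 then \<infinity> else ereal (p x * ln (p x / q x)))" for x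
  proof -
    consider "p x = 0" | "p x \<noteq> 0" "q x = 0" | "p x > 0" "q x > 0" using assms(2)[of x] assms(3)[of x] by (metis less_eq_real_def)
    then show ?thesis
    proof cases
      case 1 then show ?thesis using assms(3)[of x] by simp
    next
      case 2 then show ?thesis by simp
    next
      case 3
      have "ln (q x / p x) \<le> q x / p x - 1" using 3 by (intro ln_le_minus_one) simp
      hence "p x * ln (q x / p x) \<le> p x * (q x / p x - 1)" using 3 by (simp add: mult_left_mono)
      also have "\<dots> = q x - p x" using 3 by (simp add: field_simps)
      finally have "p x - q x \<le> p x * ln (p x / q x)" using 3 by (simp add: ln_div algebra_simps)
      then show ?thesis using 3 by simp
    qed
  qed
  hence "(\<Sum>x\<in>X. ereal (p x - q x)) \<le> KL X p q" unfolding KL_def by (intro sum_mono) auto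
  moreover have "(\<Sum>x\<in>X. ereal (p x - q x)) = 0"
    using assms by (simp add: sum_subtractf)
  ultimately show ?thesis by (metis zero_ereal_def)
qed

theorem theorem1:
  fixes \<Phi> :: "complex mat \<Rightarrow> complex mat" and \<rho>i :: "complex mat"
  assumes "CPTP \<Phi>"
    and "phase_covariant \<Phi>"
    and "density \<rho>i"
  shows "coh_fluct_dist \<Phi> \<rho>i = 0
         \<and> (\<exists>\<sigma>. incoherent \<sigma> \<and>
              KL ({0,1} \<times> {0,1}) (p_coh \<Phi> \<rho>i) (p_coh \<Phi> \<sigma>) = coh_fluct_dist \<Phi> \<rho>i)"
proof -
  have car: "\<rho>i \<in> carrier_mat 2 2" and ps: "psd 2 \<rho>i" and t: "tr \<rho>i = 1"
    using assms(3) unfolding density_def psd_def by blast+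
  define \<sigma> where "\<sigma> = mat 2 2 (\<lambda>(a,b). if a = b then \<rho>i $$ (a,a) else 0)"
  have scar: "\<sigma> \<in> carrier_mat 2 2" unfolding \<sigma>_def by simp
  define U where "U = Uz (pi/2)"
  define U' where "U' = Uz (-(pi/2))"
  have Ucar: "U \<in> carrier_mat 2 2" "U' \<in> carrier_mat 2 2" unfolding U_def U'_def Uz_def by auto
  have UU: "(U * A * U') $$ (i,i) = A $$ (i,i)" if "A \<in> carrier_mat 2 2" "i < 2" for A i
  proof -
    have "U * A \<in> carrier_mat 2 2" using Ucar that by auto
    then show ?thesis using that Ucar
      by (auto simp: scalar_prod_def less_Suc_eq eval_nat_numeral U_def U'_def Uz_def cis_mult[symmetric] algebra_simps)
  qed
  have UUoff: "(U * A * U') $$ (i,j) = - A $$ (i,j)" if "A \<in> carrier_mat 2 2" "i < 2" "j < 2" "i \<noteq> j" for A i j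
  proof -
    have "U * A \<in> carrier_mat 2 2" using Ucar that by auto
    then show ?thesis using that Ucar
      by (auto simp: scalar_prod_def less_Suc_eq eval_nat_numeral U_def U'_def Uz_def cis_mult[symmetric] algebra_simps)
  qed
  have URcar: "U * \<rho>i * U' \<in> carrier_mat 2 2" using Ucar car by auto
  have sig_eq: "\<sigma> = (1/2) \<cdot>\<^sub>m (\<rho>i + U * \<rho>i * U')"
  proof (rule eq_matI)
    fix i j assume ij: "i < dim_row ((1/2) \<cdot>\<^sub>m (\<rho>i + U * \<rho>i * U'))" "j < dim_col ((1/2) \<cdot>\<^sub>m (\<rho>i + U * \<rho>i * U'))"
    hence ij2: "i < 2" "j < 2" using URcar car by auto
    have "((1/2) \<cdot>\<^sub>m (\<rho>i + U * \<rho>i * U')) $$ (i,j) = (1/2) * (\<rho>i $$ (i,j) + (U * \<rho>i * U') $$ (i,j))"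
    proof -
      have d: "dim_row (\<rho>i + U * \<rho>i * U') = 2" "dim_col (\<rho>i + U * \<rho>i * U') = 2" using car URcar by auto
      have "((1/2) \<cdot>\<^sub>m (\<rho>i + U * \<rho>i * U')) $$ (i,j) = (1/2) * ((\<rho>i + U * \<rho>i * U') $$ (i,j))"
        using ij2 d by (intro index_smult_mat(1)) auto
      moreover have "(\<rho>i + U * \<rho>i * U') $$ (i,j) = \<rho>i $$ (i,j) + (U * \<rho>i * U') $$ (i,j)"
        using ij2 URcar by (intro index_add_mat(1)) auto
      ultimately show ?thesis by simp
    qed
    also have "\<dots> = \<sigma> $$ (i,j)"
      using UU[OF car ij2(1)] UUoff[OF car ij2] ij2 by (cases "i = j") (auto simp: \<sigma>_def)
    finally show "\<sigma> $$ (i,j) = ((1/2) \<cdot>\<^sub>m (\<rho>i + U * \<rho>i * U')) $$ (i,j)" by simp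
  qed (use URcar car in \<open>auto simp: \<sigma>_def\<close>)
  have lin: "qubit_linear \<Phi>" using assms(1) unfolding CPTP_def by blast
  have "\<Phi> \<sigma> = (1/2) \<cdot>\<^sub>m (\<Phi> \<rho>i + \<Phi> (U * \<rho>i * U'))"
    using lin car URcar unfolding sig_eq qubit_linear_def by auto
  also have "\<Phi> (U * \<rho>i * U') = U * \<Phi> \<rho>i * U'"
    using assms(2) car unfolding phase_covariant_def U_def U'_def by simp
  finally have Phs: "\<Phi> \<sigma> = (1/2) \<cdot>\<^sub>m (\<Phi> \<rho>i + U * \<Phi> \<rho>i * U')" .
  have Fcar: "\<Phi> \<rho>i \<in> carrier_mat 2 2" using CPTP_density[OF assms(1,3)] by blast
  have Fscar: "\<Phi> \<sigma> \<in> carrier_mat 2 2" using lin scar unfolding qubit_linear_def by blast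
  have Pdiag: "\<Phi> \<sigma> $$ (k,k) = \<Phi> \<rho>i $$ (k,k)" if "k < 2" for k
    using that Fcar Ucar UU[OF Fcar that] unfolding Phs by simp
  have sdiag: "\<sigma> $$ (k,k) = \<rho>i $$ (k,k)" if "k < 2" for k
    using that unfolding \<sigma>_def by simp
  have inc: "incoherent \<sigma>"
  proof -
    have "psd 2 \<sigma>"
      unfolding psd_def
    proof (intro conjI allI)
      show "\<sigma> \<in> carrier_mat 2 2" by (rule scar)
      fix v :: "nat \<Rightarrow> complex"
      have e: "(\<Sum>i<2. \<Sum>j<2. cnj (v i) * \<sigma> $$ (i, j) * v j) =
        complex_of_real ((cmod (v 0))\<^sup>2) * \<rho>i$$(0,0) + complex_of_real ((cmod (v 1))\<^sup>2) * \<rho>i$$(1,1)"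
      proof -
        have "(\<Sum>i<2. \<Sum>j<2. cnj (v i) * \<sigma> $$ (i, j) * v j) = (v 0 * cnj (v 0)) * \<rho>i$$(0,0) + (v 1 * cnj (v 1)) * \<rho>i$$(1,1)"
          by (simp add: \<sigma>_def eval_nat_numeral algebra_simps)
        then show ?thesis by (simp only: complex_norm_square[symmetric])
      qed
      have r0: "\<rho>i$$(0,0) = complex_of_real (Re (\<rho>i$$(0,0)))" "\<rho>i$$(1,1) = complex_of_real (Re (\<rho>i$$(1,1)))"
        using psd_diag(1)[OF ps, of 0] psd_diag(1)[OF ps, of 1] by (simp_all add: complex_eq_iff)
      show "Im (\<Sum>i<2. \<Sum>j<2. cnj (v i) * \<sigma> $$ (i, j) * v j) = 0"
        unfolding e by (subst r0(1), subst r0(2), simp)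
      show "Re (\<Sum>i<2. \<Sum>j<2. cnj (v i) * \<sigma> $$ (i, j) * v j) \<ge> 0"
        unfolding e using psd_diag(2)[OF ps, of 0] psd_diag(2)[OF ps, of 1]
        by (subst r0(1), subst r0(2), simp)
    qed
    moreover have "tr \<sigma> = 1" using t car unfolding tr_def \<sigma>_def by (simp add: eval_nat_numeral)
    ultimately show ?thesis unfolding incoherent_def density_def \<sigma>_def by simp
  qed
  have peq: "p_coh \<Phi> \<sigma> x = p_coh \<Phi> \<rho>i x" if "x \<in> {0,1}\<times>{0,1}" for x
    using that tr_proj[OF car] tr_proj[OF scar] tr_proj[OF Fcar] tr_proj[OF Fscar] Pdiag sdiag
    by (auto simp: p_coh_def)
  have KL0: "KL ({0,1} \<times> {0,1}) (p_coh \<Phi> \<rho>i) (p_coh \<Phi> \<sigma>) = 0"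
    unfolding KL_def by (intro sum.neutral) (simp add: peq)
  have ge: "KL ({0,1} \<times> {0,1}) (p_coh \<Phi> \<rho>i) (p_coh \<Phi> \<tau>) \<ge> 0" if "incoherent \<tau>" for \<tau>
  proof -
    have d: "density \<tau>" using that unfolding incoherent_def by blast
    show ?thesis using p_coh_props[OF assms(1) assms(3)] p_coh_props[OF assms(1) d]
      by (intro KL_nonneg) auto
  qed
  have "coh_fluct_dist \<Phi> \<rho>i = 0"
    unfolding coh_fluct_dist_def
  proof (rule antisym)
    show "(INF \<sigma>\<in>{\<sigma>. incoherent \<sigma>}. KL ({0, 1} \<times> {0, 1}) (p_coh \<Phi> \<rho>i) (p_coh \<Phi> \<sigma>)) \<le> 0"
      using inc KL0 by (metis (mono_tags, lifting) INF_lower mem_Collect_eq)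
    show "0 \<le> (INF \<sigma>\<in>{\<sigma>. incoherent \<sigma>}. KL ({0, 1} \<times> {0, 1}) (p_coh \<Phi> \<rho>i) (p_coh \<Phi> \<sigma>))"
      using ge by (auto intro: INF_greatest)
  qed
  then show ?thesis using inc KL0 by auto
qed

end
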